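(* Let $M$ be a magma satisfying $(xy)z = xx$, $x(yz) = xx$ and $xx = yy$ for all $x,y,z\in M$. Then $M$ satisfies $xy = yx$ for all $x,y\in M$ if and only if $M$ avoids both magmas $F$ (on $\{0,1,2,3\}$) and $G$ (on $\{0,1,2,3,4\}$) with Cayley tables \[ \begin{array}{c|cccc} F & 0 & 1 & 2 & 3 \\ \hline 0 & 0 & 0 & 0 & 0 \\ 1 & 0 & 0 & 3 & 0 \\ 2 & 0 & 0 & 0 & 0 \\ 3 & 0 & 0 & 0 & 0 \end{array} \qquad \begin{array}{c|ccccc} G & 0 & 1 & 2 & 3 & 4\\ \hline 0 & 0 & 0 & 0 & 0 & 0\\ 1 & 0 & 0 & 3 & 0 & 0\\ 2 & 0 & 4 & 0 & 0 & 0\\ 3 & 0 & 0 & 0 & 0 & 0\\ 4 & 0 & 0 & 0 & 0 & 0 \end{array}. \]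
   Context: A magma is a nonempty set with a binary operation, written by juxtaposition. A magma $M$ avoids a magma $F$ if no submagma of $M$ is isomorphic to $F$. *)

theory Defs
  imports Main
begin

definition is_submagma :: "('a \<Rightarrow> 'a \<Rightarrow> 'a) \<Rightarrow> 'a set \<Rightarrow> bool" where
  "is_submagma mult S \<longleftrightarrow> S \<noteq> {} \<and> (\<forall>x\<in>S. \<forall>y\<in>S. mult x y \<in> S)"

definition magma_iso :: "'b set \<Rightarrow> ('b \<Rightarrow> 'b \<Rightarrow> 'b) \<Rightarrow> 'a set \<Rightarrow> ('a \<Rightarrow> 'a \<Rightarrow> 'a) \<Rightarrow> ('b \<Rightarrow> 'a) \<Rightarrow> bool" where
  "magma_iso A opA S opS h \<longleftrightarrow> bij_betw h A S \<and> (\<forall>x\<in>A. \<forall>y\<in>A. h (opA x y) = opS (h x) (h y))"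

definition avoids :: "('a \<Rightarrow> 'a \<Rightarrow> 'a) \<Rightarrow> 'b set \<Rightarrow> ('b \<Rightarrow> 'b \<Rightarrow> 'b) \<Rightarrow> bool" where
  "avoids mult A opA \<longleftrightarrow> \<not> (\<exists>S h. is_submagma mult S \<and> magma_iso A opA S mult h)"

definition F_carrier :: "nat set" where "F_carrier = {0,1,2,3}"
definition F_op :: "nat \<Rightarrow> nat \<Rightarrow> nat" where
  "F_op x y = (if x = 1 \<and> y = 2 then 3 else 0)"

definition G_carrier :: "nat set" where "G_carrier = {0,1,2,3,4}"
definition G_op :: "nat \<Rightarrow> nat \<Rightarrow> nat" where
  "G_op x y = (if x = 1 \<and> y = 2 then 3 else if x = 2 \<and> y = 1 then 4 else 0)"

end

theory Submission
  imports Defs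
begin

theorem mainTheorem10:
  fixes mult :: "'a \<Rightarrow> 'a \<Rightarrow> 'a"
  assumes "\<And>x y z. mult (mult x y) z = mult x x"
    and "\<And>x y z. mult x (mult y z) = mult x x"
    and "\<And>x y. mult x x = mult y y"
  shows "(\<forall>x y. mult x y = mult y x) \<longleftrightarrow>
           (avoids mult F_carrier F_op \<and> avoids mult G_carrier G_op)"
proof
  assume C: "\<forall>x y. mult x y = mult y x"
  show "avoids mult F_carrier F_op \<and> avoids mult G_carrier G_op"
  proof
    show "avoids mult F_carrier F_op"
      unfolding avoids_def
    proof
      assume "\<exists>S h. is_submagma mult S \<and> magma_iso F_carrier F_op S mult h"
      then obtain S h where "magma_iso F_carrier F_op S mult h" by blast
      then have b: "bij_betw h F_carrier S" and m: "\<forall>x\<in>F_carrier. \<forall>y\<in>F_carrier. h (F_op x y) = mult (h x) (h y)"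
        unfolding magma_iso_def by auto
      have "h 3 = mult (h 1) (h 2)" using m[rule_format, of 1 2] by (simp add: F_carrier_def F_op_def)
      moreover have "h 0 = mult (h 2) (h 1)" using m[rule_format, of 2 1] by (simp add: F_carrier_def F_op_def)
      ultimately have "h 3 = h 0" using C by metis
      moreover have "inj_on h F_carrier" using b bij_betw_def by blast
      ultimately show False unfolding inj_on_def F_carrier_def by fastforce
    qed
    show "avoids mult G_carrier G_op"
      unfolding avoids_def
    proof
      assume "\<exists>S h. is_submagma mult S \<and> magma_iso G_carrier G_op S mult h"
      then obtain S h where "magma_iso G_carrier G_op S mult h" by blast
      then have b: "bij_betw h G_carrier S" and m: "\<forall>x\<in>G_carrier. \<forall>y\<in>G_carrier. h (G_op x y) = mult (h x) (h y)"
        unfolding magma_iso_def by auto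
      have "h 3 = mult (h 1) (h 2)" using m[rule_format, of 1 2] by (simp add: G_carrier_def G_op_def)
      moreover have "h 4 = mult (h 2) (h 1)" using m[rule_format, of 2 1] by (simp add: G_carrier_def G_op_def)
      ultimately have "h 3 = h 4" using C by metis
      moreover have "inj_on h G_carrier" using b bij_betw_def by blast
      ultimately show False unfolding inj_on_def G_carrier_def by fastforce
    qed
  qed
next
  assume A: "avoids mult F_carrier F_op \<and> avoids mult G_carrier G_op"
  show "\<forall>x y. mult x y = mult y x"
  proof (rule ccontr)
    assume "\<not> (\<forall>x y. mult x y = mult y x)"
    then obtain a b where ne: "mult a b \<noteq> mult b a" by blast
    define e where "e = mult a a"
    have sq[simp]: "mult x x = e" for x using assms(3) e_def by metis
    have l[simp]: "mult (mult x y) z = e" for x y z using assms(1) sq by metis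
    have r[simp]: "mult z (mult x y) = e" for x y z using assms(2) sq by metis
    have el[simp]: "mult e x = e" for x by (metis sq l)
    have er[simp]: "mult x e = e" for x by (metis sq r)
    have ae: "a \<noteq> e" using ne by auto
    have be: "b \<noteq> e" using ne by auto
    have ab: "a \<noteq> b" using ne by auto
    have a1: "a \<noteq> mult a b" using ne by (metis l r)
    have a2: "a \<noteq> mult b a" using ne by (metis l r)
    have b1: "b \<noteq> mult a b" using ne by (metis l r)
    have b2: "b \<noteq> mult b a" using ne by (metis l r)
    show False
    proof (cases "mult a b = e \<or> mult b a = e")
      case True
      then obtain c d where cd: "mult c d \<noteq> e" "mult d c = e" "c \<noteq> e" "d \<noteq> e" "c \<noteq> d"
        "c \<noteq> mult c d" "d \<noteq> mult c d"
        using ne ae be ab a1 a2 b1 b2 by metis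
      define h where "h n = (if n = 0 then e else if n = 1 then c else if n = 2 then d else mult c d)" for n :: nat
      define S where "S = {e, c, d, mult c d}"
      have "is_submagma mult S" unfolding is_submagma_def S_def using cd by auto
      moreover have "magma_iso F_carrier F_op S mult h"
        unfolding magma_iso_def bij_betw_def inj_on_def S_def F_carrier_def
        using cd by (auto simp: h_def F_op_def)
      ultimately show False using A unfolding avoids_def by blast
    next
      case False
      define h where "h n = (if n = 0 then e else if n = 1 then a else if n = 2 then b else if n = 3 then mult a b else mult b a)" for n :: nat
      define S where "S = {e, a, b, mult a b, mult b a}"
      have "is_submagma mult S" unfolding is_submagma_def S_def by auto
      moreover have "magma_iso G_carrier G_op S mult h"
        unfolding magma_iso_def bij_betw_def inj_on_def S_def G_carrier_def
        using False ne ae be ab a1 a2 b1 b2 by (auto simp: h_def G_op_def)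
      ultimately show False using A unfolding avoids_def by blast
    qed
  qed
qed

end
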